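(* Let $Y$ be a discrete random variable taking values in a set $\mathcal{Y}$, and let $B=(B_0,\dots,B_{m-1})$ be a random vector taking values in $\{0,1\}^m$. Assume $\mathbf{H}(Y\mid B)=0$ and that the components of $B$ are independent conditionally on $Y$. For $y_n\in\mathcal{Y}$ with $P(Y=y_n)>0$ define $\varphi^{(n)}\in\{-1,0,1\}^m$ by $\varphi^{(n)}_i=0$ if $P(B_i=1\mid Y=y_n)\in(0,1)$, $\varphi^{(n)}_i=-1$ if $P(B_i=1\mid Y=y_n)=0$, and $\varphi^{(n)}_i=1$ if $P(B_i=1\mid Y=y_n)=1$. Then for any $y_n,y_l\in\mathcal{Y}$ with $P(Y=y_n)>0$, $P(Y=y_l)>0$ and $y_l\neq y_n$, there exists an index $i$ with $\varphi^{(n)}_i=-\varphi^{(l)}_i\neq 0$.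
   Context: $\mathbf{H}(Y\mid B)$ is the conditional Shannon entropy; conditional independence of the components means $P(B=b\mid Y=y)=\prod_i P(B_i=b_i\mid Y=y)$ for all $b$ and all $y$ with $P(Y=y)>0$. *)

theory Defs
  imports "HOL-Probability.Probability"
begin

text \<open>The joint distribution of (Y, B) is a pmf on pairs (y, b), where b is a bool list
  (True = 1, False = 0) of length m.\<close>

definition PY :: "('y \<times> bool list) pmf \<Rightarrow> 'y \<Rightarrow> real" where
  "PY p y = measure_pmf.prob p {z. fst z = y}"

definition cprobBi :: "('y \<times> bool list) pmf \<Rightarrow> nat \<Rightarrow> bool \<Rightarrow> 'y \<Rightarrow> real" where
  "cprobBi p i v y = measure_pmf.prob p {z. fst z = y \<and> snd z ! i = v} / PY p y"

definition cprobB :: "('y \<times> bool list) pmf \<Rightarrow> bool list \<Rightarrow> 'y \<Rightarrow> real" where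
  "cprobB p b y = measure_pmf.prob p {z. fst z = y \<and> snd z = b} / PY p y"

text \<open>Conditional Shannon entropy H(Y|B) = E[- log P(Y | B)] (natural log; the base is
  irrelevant for the statement H = 0), valued in ennreal so that it may be infinite.\<close>
definition cond_entropy_YB :: "('y \<times> bool list) pmf \<Rightarrow> ennreal" where
  "cond_entropy_YB p =
     (\<integral>\<^sup>+ z. ennreal (- ln (pmf p z / pmf (map_pmf snd p) (snd z))) \<partial>measure_pmf p)"

definition cond_indep_components :: "('y \<times> bool list) pmf \<Rightarrow> nat \<Rightarrow> bool" where
  "cond_indep_components p m \<longleftrightarrow>
     (\<forall>y b. PY p y > 0 \<longrightarrow> length b = m \<longrightarrow>
        cprobB p b y = (\<Prod>i<m. cprobBi p i (b ! i) y))"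

definition phi :: "('y \<times> bool list) pmf \<Rightarrow> nat \<Rightarrow> 'y \<Rightarrow> int list" where
  "phi p m y = map (\<lambda>i. if cprobBi p i True y = 0 then -1
                         else if cprobBi p i True y = 1 then 1 else 0) [0..<m]"

end

theory Submission
  imports Defs
begin

lemma cprobBi_sum:
  assumes "PY p y > 0"
  shows "cprobBi p i True y + cprobBi p i False y = 1"
proof -
  have "measure_pmf.prob p {z. fst z = y \<and> snd z ! i = True} + measure_pmf.prob p {z. fst z = y \<and> snd z ! i = False}
      = measure_pmf.prob p ({z. fst z = y \<and> snd z ! i = True} \<union> {z. fst z = y \<and> snd z ! i = False})"
    by (subst measure_pmf.finite_measure_Union) auto
  also have "({z. fst z = y \<and> snd z ! i = True} \<union> {z. fst z = y \<and> snd z ! i = False}) = {z. fst z = y}" by auto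
  finally show ?thesis using assms unfolding cprobBi_def PY_def by (simp add: add_divide_distrib[symmetric])
qed

lemma cprobBi_nonneg: "cprobBi p i v y \<ge> 0"
  unfolding cprobBi_def PY_def by simp

lemma cprobB_pos_mem:
  assumes "cprobB p b y > 0"
  shows "(y, b) \<in> set_pmf p"
proof -
  have "{z. fst z = y \<and> snd z = b} = {(y,b)}" by auto
  then have "cprobB p b y = pmf p (y,b) / PY p y" unfolding cprobB_def by (simp add: measure_pmf_single)
  with assms have "pmf p (y,b) \<noteq> 0" by auto
  then show ?thesis by (simp add: set_pmf_iff)
qed

lemma entropy_zero:
  assumes "cond_entropy_YB p = 0" "z \<in> set_pmf p"
  shows "pmf p z \<ge> pmf (map_pmf snd p) (snd z)"
proof -
  have "AE z in measure_pmf p. ennreal (- ln (pmf p z / pmf (map_pmf snd p) (snd z))) = 0"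
    using assms(1) unfolding cond_entropy_YB_def
    by (subst nn_integral_0_iff_AE[symmetric]) auto
  then have "ennreal (- ln (pmf p z / pmf (map_pmf snd p) (snd z))) = 0"
    using assms(2) by (simp add: AE_measure_pmf_iff)
  then have h: "ln (pmf p z / pmf (map_pmf snd p) (snd z)) \<ge> 0" by (simp add: ennreal_eq_0_iff)
  have pz: "pmf p z > 0" using assms(2) by (simp add: pmf_positive)
  have "snd z \<in> set_pmf (map_pmf snd p)" using assms(2) by auto
  then have pb: "pmf (map_pmf snd p) (snd z) > 0" by (simp add: pmf_positive)
  have "pmf p z / pmf (map_pmf snd p) (snd z) > 0" using pz pb by simp
  with h have "pmf p z / pmf (map_pmf snd p) (snd z) \<ge> 1" using ln_ge_zero_iff by blast
  with pb show ?thesis by (simp add: le_divide_eq)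
qed

theorem lemma3:
  fixes p :: "('y \<times> bool list) pmf" and m :: nat and yn yl :: 'y
  assumes "\<forall>z \<in> set_pmf p. length (snd z) = m"
    and "cond_entropy_YB p = 0"
    and "cond_indep_components p m"
    and "PY p yn > 0" and "PY p yl > 0" and "yl \<noteq> yn"
  shows "\<exists>i<m. phi p m yn ! i = - (phi p m yl ! i) \<and> phi p m yn ! i \<noteq> 0"
proof (rule ccontr)
  assume H: "\<not> ?thesis"
  have ex: "\<exists>v. cprobBi p i v yn > 0 \<and> cprobBi p i v yl > 0" if i: "i < m" for i
  proof -
    have "\<not> (phi p m yn ! i = - (phi p m yl ! i) \<and> phi p m yn ! i \<noteq> 0)" using H i by blast
    moreover have s1: "cprobBi p i True yn + cprobBi p i False yn = 1" using assms(4) by (rule cprobBi_sum)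
    moreover have s2: "cprobBi p i True yl + cprobBi p i False yl = 1" using assms(5) by (rule cprobBi_sum)
    moreover note cprobBi_nonneg[of p i True yn] cprobBi_nonneg[of p i False yn]
      cprobBi_nonneg[of p i True yl] cprobBi_nonneg[of p i False yl]
    ultimately show ?thesis using i unfolding phi_def
      by (smt (verit) add_0 diff_zero length_upt nth_map nth_upt)
  qed
  define b where "b = map (\<lambda>i. SOME v. cprobBi p i v yn > 0 \<and> cprobBi p i v yl > 0) [0..<m]"
  have lb: "length b = m" unfolding b_def by simp
  have bi: "cprobBi p i (b ! i) yn > 0 \<and> cprobBi p i (b ! i) yl > 0" if "i < m" for i
    using someI_ex[OF ex[OF that]] that unfolding b_def by simp
  have "cprobB p b yn > 0"
    using assms(3) assms(4) lb bi unfolding cond_indep_components_def by (auto intro!: prod_pos)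
  then have m1: "(yn, b) \<in> set_pmf p" by (rule cprobB_pos_mem)
  have "cprobB p b yl > 0"
    using assms(3) assms(5) lb bi unfolding cond_indep_components_def by (auto intro!: prod_pos)
  then have m2: "(yl, b) \<in> set_pmf p" by (rule cprobB_pos_mem)
  have "pmf p (yn, b) \<ge> pmf (map_pmf snd p) b" using entropy_zero[OF assms(2) m1] by simp
  moreover have "pmf (map_pmf snd p) b = measure_pmf.prob p (snd -` {b})" by (simp add: pmf_map)
  moreover have "measure_pmf.prob p {(yn,b),(yl,b)} \<le> measure_pmf.prob p (snd -` {b})"
    by (rule measure_pmf.finite_measure_mono) auto
  moreover have "measure_pmf.prob p {(yn,b),(yl,b)} = pmf p (yn,b) + pmf p (yl,b)"
    using assms(6) by (simp add: measure_measure_pmf_finite)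
  moreover have "pmf p (yl,b) > 0" using m2 by (simp add: pmf_positive)
  ultimately show False by linarith
qed

end
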